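(* Let $\Omega$ be a set and let $G\le\mathrm{Sym}(\Omega)$ be $k$-by-block-transitive on $\Omega$ relative to the equivalence relation $\sim$, for some $k\ge 2$. Then for each $\omega\in\Omega$, the block stabilizer $G([\omega])$ is the largest proper subgroup of $G$ containing $G(\omega)$ (every proper subgroup of $G$ containing $G(\omega)$ is contained in $G([\omega])$). Equivalently, $\sim$ is the coarsest nonuniversal $G$-invariant equivalence relation on $\Omega$.
   Context: Blocks are $\sim$-classes; $[\omega]$ is the block of $\omega$, $G([\omega])$ its setwise stabilizer, $G(\omega)$ the stabilizer of $\omega$. $\Omega^{[k]}$ is the set of $k$-tuples no two entries of which lie in the same block. $G$ is $k$-by-block-transitive if $\sim$ is $G$-invariant, there are at least $k$ blocks, and $G$ is transitive on $\Omega^{[k]}$. *)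

theory Defs
  imports "HOL-Algebra.Bij"
begin

text \<open>Permutation groups on \<Omega> are subgroups of BijGroup \<Omega>.
  The equivalence relation \<sim> is a relation r with equiv \<Omega> r.\<close>

definition block :: "('a \<times> 'a) set \<Rightarrow> 'a \<Rightarrow> 'a set" where
  "block r \<omega> = r `` {\<omega>}"

definition point_stab :: "('a \<Rightarrow> 'a) set \<Rightarrow> 'a \<Rightarrow> ('a \<Rightarrow> 'a) set" where
  "point_stab G \<omega> = {g \<in> G. g \<omega> = \<omega>}"

definition block_stab :: "('a \<Rightarrow> 'a) set \<Rightarrow> ('a \<times> 'a) set \<Rightarrow> 'a \<Rightarrow> ('a \<Rightarrow> 'a) set" where
  "block_stab G r \<omega> = {g \<in> G. g ` block r \<omega> = block r \<omega>}"

definition G_invariant :: "('a \<Rightarrow> 'a) set \<Rightarrow> ('a \<times> 'a) set \<Rightarrow> bool" where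
  "G_invariant G r \<longleftrightarrow> (\<forall>g\<in>G. \<forall>x y. (x, y) \<in> r \<longrightarrow> (g x, g y) \<in> r)"

definition by_block_tuples :: "'a set \<Rightarrow> ('a \<times> 'a) set \<Rightarrow> nat \<Rightarrow> 'a list set" where
  "by_block_tuples \<Omega> r k = {xs. length xs = k \<and> set xs \<subseteq> \<Omega> \<and>
      (\<forall>i<k. \<forall>j<k. i \<noteq> j \<longrightarrow> (xs ! i, xs ! j) \<notin> r)}"

definition k_by_block_transitive ::
  "'a set \<Rightarrow> ('a \<times> 'a) set \<Rightarrow> ('a \<Rightarrow> 'a) set \<Rightarrow> nat \<Rightarrow> bool" where
  "k_by_block_transitive \<Omega> r G k \<longleftrightarrow>
     G_invariant G r \<and>
     (\<exists>B. B \<subseteq> \<Omega> // r \<and> finite B \<and> card B = k) \<and>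
     (\<forall>xs\<in>by_block_tuples \<Omega> r k. \<forall>ys\<in>by_block_tuples \<Omega> r k. \<exists>g\<in>G. map g xs = ys)"

end

theory Submission imports Defs begin

lemma T_char:
  assumes "equiv \<Omega> r"
  shows "by_block_tuples \<Omega> r k = {xs. length xs = k \<and> set xs \<subseteq> \<Omega> \<and> distinct (map (\<lambda>x. r``{x}) xs)}"
proof -
  have "(\<forall>i<k. \<forall>j<k. i \<noteq> j \<longrightarrow> (xs ! i, xs ! j) \<notin> r) \<longleftrightarrow> distinct (map (\<lambda>x. r``{x}) xs)"
    if "length xs = k" "set xs \<subseteq> \<Omega>" for xs
  proof -
    have "\<And>i j. i < k \<Longrightarrow> j < k \<Longrightarrow> (xs ! i, xs ! j) \<in> r \<longleftrightarrow> r``{xs!i} = r``{xs!j}"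
      using that equiv_class_eq_iff[OF assms] by (metis nth_mem subsetD)
    then show ?thesis using that by (auto simp: distinct_conv_nth)
  qed
  then show ?thesis unfolding by_block_tuples_def by blast
qed

lemma ext_tuple:
  assumes eq: "equiv \<Omega> r" and B: "B \<subseteq> \<Omega> // r" "finite B" "card B = k" and k: "k \<ge> 2"
    and w: "\<omega> \<in> \<Omega>" "x \<in> \<Omega>" "(\<omega>, x) \<notin> r"
  shows "\<exists>rest. \<omega> # x # rest \<in> by_block_tuples \<Omega> r k \<and> x # \<omega> # rest \<in> by_block_tuples \<Omega> r k"
proof -
  let ?cls = "\<lambda>y. r``{y}"
  define C0 where "C0 = B - {?cls \<omega>, ?cls x}"
  have "card B - card {?cls \<omega>, ?cls x} \<le> card C0"
    unfolding C0_def by (rule diff_card_le_card_Diff) simp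
  moreover have "card {?cls \<omega>, ?cls x} \<le> 2" by (simp add: card_insert_le_m1)
  ultimately have "k - 2 \<le> card C0" using B by linarith
  then obtain C where C: "C \<subseteq> C0" "card C = k - 2"
    by (meson obtain_subset_with_card_n)
  have fC: "finite C" using C B unfolding C0_def by (meson finite_Diff finite_subset)
  obtain cs where cs: "set cs = C" "distinct cs" using finite_distinct_list[OF fC] by blast
  have lcs: "length cs = k - 2" using cs C distinct_card by metis
  define rest where "rest = map (\<lambda>c. SOME y. y \<in> c) cs"
  have rep: "(SOME y. y \<in> c) \<in> \<Omega> \<and> ?cls (SOME y. y \<in> c) = c" if "c \<in> C" for c
  proof -
    have "c \<in> \<Omega> // r" using that C B unfolding C0_def by blast
    then obtain a where a: "a \<in> \<Omega>" "c = ?cls a" by (auto elim: quotientE)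
    have "a \<in> c" using a eq by (simp add: equiv_class_self equiv_def refl_on_def)
    then have s: "(SOME y. y \<in> c) \<in> c" by (rule someI)
    then have "(a, SOME y. y \<in> c) \<in> r" using a by simp
    then show ?thesis using a eq equiv_class_eq[OF eq] 
      by (metis equiv_class_eq_iff)
  qed
  have mr: "map ?cls rest = cs" unfolding rest_def map_map
    by (rule map_idI) (use rep cs(1) in auto)
  have rs: "set rest \<subseteq> \<Omega>" unfolding rest_def using rep cs(1) by auto
  have ne: "?cls \<omega> \<noteq> ?cls x" using w eq equiv_class_eq_iff by fast
  have nC: "?cls \<omega> \<notin> C" "?cls x \<notin> C" using C unfolding C0_def by auto
  show ?thesis
    apply (rule exI[of _ rest])
    unfolding T_char[OF eq] using mr rs ne nC cs lcs k w
    by (auto simp: length_map[of ?cls rest, symmetric])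
qed
lemma BG_mult: "g \<in> Bij S \<Longrightarrow> h \<in> Bij S \<Longrightarrow> x \<in> S \<Longrightarrow> (g \<otimes>\<^bsub>BijGroup S\<^esub> h) x = g (h x)"
  by (simp add: BijGroup_def compose_def)

lemma BG_in: "g \<in> Bij S \<Longrightarrow> x \<in> S \<Longrightarrow> g x \<in> S"
  using Bij_imp_funcset by blast

lemma BG_inv1: "g \<in> Bij S \<Longrightarrow> x \<in> S \<Longrightarrow> g ((inv\<^bsub>BijGroup S\<^esub> g) x) = x"
  by (simp add: inv_BijGroup Bij_def bij_betw_def f_inv_into_f)

lemma BG_inv2: "g \<in> Bij S \<Longrightarrow> x \<in> S \<Longrightarrow> (inv\<^bsub>BijGroup S\<^esub> g) (g x) = x"
  by (simp add: inv_BijGroup Bij_def bij_betw_def inv_into_f_f BG_in)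

theorem lemma2p3:
  fixes \<Omega> :: "'a set" and r :: "('a \<times> 'a) set" and G :: "('a \<Rightarrow> 'a) set" and k :: nat
  assumes "subgroup G (BijGroup \<Omega>)"
    and "equiv \<Omega> r"
    and "k \<ge> 2"
    and "k_by_block_transitive \<Omega> r G k"
  shows "(\<forall>\<omega>\<in>\<Omega>.
            subgroup (block_stab G r \<omega>) (BijGroup \<Omega>) \<and>
            point_stab G \<omega> \<subseteq> block_stab G r \<omega> \<and>
            block_stab G r \<omega> \<subset> G \<and>
            (\<forall>H. subgroup H (BijGroup \<Omega>) \<and> point_stab G \<omega> \<subseteq> H \<and> H \<subset> G
                 \<longrightarrow> H \<subseteq> block_stab G r \<omega>))
       \<and> (r \<noteq> \<Omega> \<times> \<Omega> \<and>
          (\<forall>s. equiv \<Omega> s \<and> G_invariant G s \<and> s \<noteq> \<Omega> \<times> \<Omega> \<longrightarrow> s \<subseteq> r))"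
proof -
  note sG = assms(1) and eq = assms(2) and k = assms(3)
  let ?BG = "BijGroup \<Omega>"
  let ?T = "by_block_tuples \<Omega> r k"
  have grp: "group ?BG" by (rule group_BijGroup)
  interpret BG: group ?BG by (rule grp)
  have GB: "G \<subseteq> Bij \<Omega>" using subgroup.subset[OF sG] by (simp add: BijGroup_def)
  have minv: "inv\<^bsub>?BG\<^esub> g \<in> G" if "g \<in> G" for g using subgroup.m_inv_closed[OF sG that] .
  have mcl: "g \<otimes>\<^bsub>?BG\<^esub> h \<in> G" if "g \<in> G" "h \<in> G" for g h using subgroup.m_closed[OF sG that] .
  have rO: "r \<subseteq> \<Omega> \<times> \<Omega>" using eq by (simp add: equiv_type)
  have eqs: "refl_on \<Omega> r" "sym r" "trans r" using eq unfolding equiv_def by simp_all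
  have symr: "(y, x) \<in> r" if "(x, y) \<in> r" for x y using eqs(2) that by (rule symD)
  have transr: "(x, z) \<in> r" if "(x, y) \<in> r" "(y, z) \<in> r" for x y z using eqs(3) that by (rule transD)
  have reflr: "(x, x) \<in> r" if "x \<in> \<Omega>" for x using eqs(1) that by (rule refl_onD)
  have kb: "G_invariant G r \<and> (\<exists>B. B \<subseteq> \<Omega> // r \<and> finite B \<and> card B = k) \<and>
     (\<forall>xs\<in>?T. \<forall>ys\<in>?T. \<exists>g\<in>G. map g xs = ys)"
    using assms(4) unfolding k_by_block_transitive_def .
  then have Ginv: "G_invariant G r" and Bex: "\<exists>B. B \<subseteq> \<Omega> // r \<and> finite B \<and> card B = k"
    by simp_all
  have tr: "\<exists>g\<in>G. map g xs = ys" if "xs \<in> ?T" "ys \<in> ?T" for xs ys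
    using kb that by blast
  have inva: "(g x, g y) \<in> r" if "g \<in> G" "(x, y) \<in> r" for g x y
    using Ginv that unfolding G_invariant_def by blast
  have inO: "g x \<in> \<Omega>" if "g \<in> G" "x \<in> \<Omega>" for g x by (rule BG_in[OF subsetD[OF GB that(1)] that(2)])
  have i1: "g ((inv\<^bsub>?BG\<^esub> g) x) = x" if "g \<in> G" "x \<in> \<Omega>" for g x by (rule BG_inv1[OF subsetD[OF GB that(1)] that(2)])
  have i2: "(inv\<^bsub>?BG\<^esub> g) (g x) = x" if "g \<in> G" "x \<in> \<Omega>" for g x by (rule BG_inv2[OF subsetD[OF GB that(1)] that(2)])
  have ml: "(g \<otimes>\<^bsub>?BG\<^esub> h) x = g (h x)" if "g \<in> G" "h \<in> G" "x \<in> \<Omega>" for g h x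
    by (rule BG_mult[OF subsetD[OF GB that(1)] subsetD[OF GB that(2)] that(3)])
  have img: "g ` block r \<omega> = block r (g \<omega>)" if "g \<in> G" "\<omega> \<in> \<Omega>" for g \<omega>
  proof
    show "g ` block r \<omega> \<subseteq> block r (g \<omega>)" unfolding block_def using inva that by auto
  next
    show "block r (g \<omega>) \<subseteq> g ` block r \<omega>"
    proof
      fix y assume "y \<in> block r (g \<omega>)"
      then have y: "(g \<omega>, y) \<in> r" by (simp add: block_def)
      then have yO: "y \<in> \<Omega>" using rO by blast
      have "((inv\<^bsub>?BG\<^esub> g) (g \<omega>), (inv\<^bsub>?BG\<^esub> g) y) \<in> r" using inva[OF minv[OF that(1)] y] .
      then have "(\<omega>, (inv\<^bsub>?BG\<^esub> g) y) \<in> r" using i2 that by simp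
      then show "y \<in> g ` block r \<omega>" unfolding block_def using i1[OF that(1) yO]
        by (metis Image_singleton_iff image_eqI)
    qed
  qed
  have bs: "g \<in> block_stab G r \<omega> \<longleftrightarrow> (\<omega>, g \<omega>) \<in> r" if "g \<in> G" "\<omega> \<in> \<Omega>" for g \<omega>
  proof -
    have "g \<in> block_stab G r \<omega> \<longleftrightarrow> r``{g \<omega>} = r``{\<omega>}"
      unfolding block_stab_def using img[OF that] that by (simp add: block_def)
    also have "\<dots> \<longleftrightarrow> (\<omega>, g \<omega>) \<in> r" using equiv_class_eq_iff[OF eq] inO that by metis
    finally show ?thesis .
  qed
  have bsG: "block_stab G r \<omega> \<subseteq> G" for \<omega> unfolding block_stab_def by blast
  obtain B where B: "B \<subseteq> \<Omega> // r" "finite B" "card B = k" using Bex by blast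
  have other: "\<exists>x\<in>\<Omega>. (\<omega>, x) \<notin> r" if "\<omega> \<in> \<Omega>" for \<omega>
  proof -
    have "card B > 1" using B k by simp
    then obtain c where c: "c \<in> B" "c \<noteq> r``{\<omega>}"
      by (metis B(2) card_le_Suc0_iff_eq less_le_not_le nat_le_linear One_nat_def)
    then obtain x where x: "x \<in> \<Omega>" "c = r``{x}" using B by (auto elim: quotientE)
    then have "(\<omega>, x) \<notin> r" using c equiv_class_eq[OF eq] by metis
    then show ?thesis using x by blast
  qed
  have ext: "\<exists>rest. \<omega> # x # rest \<in> ?T \<and> x # \<omega> # rest \<in> ?T"
    if "\<omega> \<in> \<Omega>" "x \<in> \<Omega>" "(\<omega>, x) \<notin> r" for \<omega> x
    using ext_tuple[OF eq B k that] .
  have two: "\<exists>g\<in>G. g a = x \<and> g b = y"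
    if ab: "a \<in> \<Omega>" "b \<in> \<Omega>" "(a, b) \<notin> r" and xy: "x \<in> \<Omega>" "y \<in> \<Omega>" "(x, y) \<notin> r" for a b x y
  proof -
    obtain r1 where r1: "a # b # r1 \<in> ?T" using ext[OF ab] by blast
    obtain r2 where r2: "x # y # r2 \<in> ?T" using ext[OF xy] by blast
    from tr[OF r1 r2] obtain g where "g \<in> G" "map g (a # b # r1) = x # y # r2" ..
    then show ?thesis by auto
  qed
  have part1: "subgroup (block_stab G r \<omega>) ?BG \<and>
            point_stab G \<omega> \<subseteq> block_stab G r \<omega> \<and>
            block_stab G r \<omega> \<subset> G \<and>
            (\<forall>H. subgroup H ?BG \<and> point_stab G \<omega> \<subseteq> H \<and> H \<subset> G
                 \<longrightarrow> H \<subseteq> block_stab G r \<omega>)" if w: "\<omega> \<in> \<Omega>" for \<omega>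
  proof (intro conjI allI impI)
    show "subgroup (block_stab G r \<omega>) ?BG"
    proof (rule group.subgroupI[OF grp])
      show "block_stab G r \<omega> \<subseteq> carrier ?BG" using bsG subgroup.subset[OF sG] by blast
      have "\<one>\<^bsub>?BG\<^esub> \<in> G" using subgroup.one_closed[OF sG] .
      moreover have "\<one>\<^bsub>?BG\<^esub> \<omega> = \<omega>" using w by (simp add: BijGroup_def)
      ultimately show "block_stab G r \<omega> \<noteq> {}" using bs w reflr by fastforce
    next
      fix g assume g: "g \<in> block_stab G r \<omega>"
      then have gG: "g \<in> G" and gw: "(\<omega>, g \<omega>) \<in> r" using bsG bs w by blast+
      have "((inv\<^bsub>?BG\<^esub> g) \<omega>, (inv\<^bsub>?BG\<^esub> g) (g \<omega>)) \<in> r" using inva[OF minv[OF gG] gw] .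
      then have "(\<omega>, (inv\<^bsub>?BG\<^esub> g) \<omega>) \<in> r" using i2[OF gG w] symr by simp
      then show "inv\<^bsub>?BG\<^esub> g \<in> block_stab G r \<omega>" using bs minv[OF gG] w by blast
    next
      fix g h assume g: "g \<in> block_stab G r \<omega>" and h: "h \<in> block_stab G r \<omega>"
      then have gG: "g \<in> G" and gw: "(\<omega>, g \<omega>) \<in> r" and hG: "h \<in> G" and hw: "(\<omega>, h \<omega>) \<in> r"
        using bsG bs w by blast+
      have "(g \<omega>, g (h \<omega>)) \<in> r" using inva[OF gG hw] .
      then have "(\<omega>, (g \<otimes>\<^bsub>?BG\<^esub> h) \<omega>) \<in> r" using ml[OF gG hG w] transr gw by simp
      then show "g \<otimes>\<^bsub>?BG\<^esub> h \<in> block_stab G r \<omega>" using bs mcl[OF gG hG] w by blast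
    qed
  next
    show "point_stab G \<omega> \<subseteq> block_stab G r \<omega>"
      using bs w reflr unfolding point_stab_def by auto
  next
    obtain x where x: "x \<in> \<Omega>" "(\<omega>, x) \<notin> r" using other[OF w] by blast
    then have "(x, \<omega>) \<notin> r" using symr by blast
    then obtain g where g: "g \<in> G" "g \<omega> = x" using two[OF w x(1) x(2) x(1) w] by blast
    then have "g \<notin> block_stab G r \<omega>" using bs w x by simp
    then show "block_stab G r \<omega> \<subset> G" using bsG g by blast
  next
    fix H assume H: "subgroup H ?BG \<and> point_stab G \<omega> \<subseteq> H \<and> H \<subset> G"
    show "H \<subseteq> block_stab G r \<omega>"
    proof (rule ccontr)
      assume "\<not> H \<subseteq> block_stab G r \<omega>"
      then obtain h where h: "h \<in> H" "h \<notin> block_stab G r \<omega>" by blast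
      have hG: "h \<in> G" using H h by blast
      have hw: "(\<omega>, h \<omega>) \<notin> r" using bs[OF hG w] h by blast
      have sH: "subgroup H ?BG" using H by blast
      have A: "g \<in> H" if gG: "g \<in> G" and gw: "(\<omega>, g \<omega>) \<notin> r" for g
      proof -
        obtain a where a: "a \<in> G" "a \<omega> = \<omega>" "a (h \<omega>) = g \<omega>"
          using two[OF w inO[OF hG w] hw w inO[OF gG w] gw] by blast
        have aH: "a \<in> H" using H a unfolding point_stab_def by blast
        define b where "b = inv\<^bsub>?BG\<^esub> g \<otimes>\<^bsub>?BG\<^esub> (a \<otimes>\<^bsub>?BG\<^esub> h)"
        have bG: "b \<in> G" unfolding b_def using mcl minv gG a hG by blast
        have "b \<omega> = \<omega>" unfolding b_def
          using ml[OF minv[OF gG] mcl[OF a(1) hG] w] ml[OF a(1) hG w] a i2[OF gG w] by simp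
        then have bH: "b \<in> H" using H bG unfolding point_stab_def by blast
        have gc: "g \<in> carrier ?BG" "a \<in> carrier ?BG" "h \<in> carrier ?BG"
          using gG a hG subgroup.subset[OF sG] by blast+
        define p where "p = a \<otimes>\<^bsub>?BG\<^esub> h"
        have pc: "p \<in> carrier ?BG" unfolding p_def using gc by simp
        have "inv\<^bsub>?BG\<^esub> b = inv\<^bsub>?BG\<^esub> p \<otimes>\<^bsub>?BG\<^esub> g"
          unfolding b_def p_def[symmetric] using gc pc by (simp add: BG.inv_mult_group)
        then have "p \<otimes>\<^bsub>?BG\<^esub> inv\<^bsub>?BG\<^esub> b = g"
          using gc pc by (simp add: BG.m_assoc[symmetric])
        then have geq: "(a \<otimes>\<^bsub>?BG\<^esub> h) \<otimes>\<^bsub>?BG\<^esub> inv\<^bsub>?BG\<^esub> b = g" unfolding p_def by simp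
        have "(a \<otimes>\<^bsub>?BG\<^esub> h) \<otimes>\<^bsub>?BG\<^esub> inv\<^bsub>?BG\<^esub> b \<in> H"
          by (rule subgroup.m_closed[OF sH subgroup.m_closed[OF sH aH h(1)] subgroup.m_inv_closed[OF sH bH]])
        then show "g \<in> H" by (simp only: geq)
      qed
      have "G \<subseteq> H"
      proof
        fix g assume gG: "g \<in> G"
        show "g \<in> H"
        proof (cases "(\<omega>, g \<omega>) \<in> r")
          case False then show ?thesis using A gG by blast
        next
          case True
          have "(\<omega>, (g \<otimes>\<^bsub>?BG\<^esub> h) \<omega>) \<notin> r"
          proof
            assume "(\<omega>, (g \<otimes>\<^bsub>?BG\<^esub> h) \<omega>) \<in> r"
            then have "(g \<omega>, g (h \<omega>)) \<in> r" using ml[OF gG hG w] True symr transr by metis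
            then have "((inv\<^bsub>?BG\<^esub> g) (g \<omega>), (inv\<^bsub>?BG\<^esub> g) (g (h \<omega>))) \<in> r"
              using inva[OF minv[OF gG]] by blast
            then show False using i2[OF gG w] i2[OF gG inO[OF hG w]] hw by simp
          qed
          then have gh: "g \<otimes>\<^bsub>?BG\<^esub> h \<in> H" using A mcl[OF gG hG] by blast
          have gc: "g \<in> carrier ?BG" "h \<in> carrier ?BG"
            using gG hG subgroup.subset[OF sG] by blast+
          have geq: "(g \<otimes>\<^bsub>?BG\<^esub> h) \<otimes>\<^bsub>?BG\<^esub> inv\<^bsub>?BG\<^esub> h = g"
            using gc by (simp add: BG.m_assoc)
          have "(g \<otimes>\<^bsub>?BG\<^esub> h) \<otimes>\<^bsub>?BG\<^esub> inv\<^bsub>?BG\<^esub> h \<in> H"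
            by (rule subgroup.m_closed[OF sH gh subgroup.m_inv_closed[OF sH h(1)]])
          then show ?thesis by (simp only: geq)
        qed
      qed
      then show False using H by blast
    qed
  qed
  have rne: "r \<noteq> \<Omega> \<times> \<Omega>"
  proof -
    have "card B > 0" using B k by simp
    then have "B \<noteq> {}" by (simp add: card_gt_0_iff)
    then obtain c where "c \<in> B" by blast
    then obtain w where w: "w \<in> \<Omega>" using B by (auto elim: quotientE)
    then obtain x where "x \<in> \<Omega>" "(w, x) \<notin> r" using other by blast
    then show ?thesis using w by blast
  qed
  have coarse: "s \<subseteq> r" if s: "equiv \<Omega> s" "G_invariant G s" "s \<noteq> \<Omega> \<times> \<Omega>" for s
  proof (rule ccontr)
    assume "\<not> s \<subseteq> r"
    then obtain a b where ab: "(a, b) \<in> s" "(a, b) \<notin> r" by auto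
    have sO: "s \<subseteq> \<Omega> \<times> \<Omega>" using s by (simp add: equiv_type)
    then have abO: "a \<in> \<Omega>" "b \<in> \<Omega>" using ab by blast+
    have nr: "(x, y) \<in> s" if xyr: "x \<in> \<Omega>" "y \<in> \<Omega>" "(x, y) \<notin> r" for x y
    proof -
      obtain g where g: "g \<in> G" "g a = x" "g b = y" using two[OF abO ab(2) xyr] by blast
      have "(g a, g b) \<in> s" using s(2) g(1) ab(1) unfolding G_invariant_def by blast
      then show ?thesis by (simp add: g)
    qed
    have "\<Omega> \<times> \<Omega> \<subseteq> s"
    proof clarify
      fix x y assume xy: "x \<in> \<Omega>" "y \<in> \<Omega>"
      show "(x, y) \<in> s"
      proof (cases "(x, y) \<in> r")
        case False then show ?thesis using nr xy by blast
      next
        case True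
        obtain z where z: "z \<in> \<Omega>" "(x, z) \<notin> r" using other xy by blast
        have "(z, y) \<notin> r"
        proof
          assume "(z, y) \<in> r"
          then have "(x, z) \<in> r" using transr[OF True symr] by blast
          then show False using z by blast
        qed
        then have "(x, z) \<in> s" "(z, y) \<in> s" using nr z xy by blast+
        moreover have "trans s" using s(1) unfolding equiv_def by simp
        ultimately show ?thesis by (blast dest: transD)
      qed
    qed
    then show False using sO s(3) by blast
  qed
  show ?thesis
  proof (intro conjI)
    show "\<forall>\<omega>\<in>\<Omega>. subgroup (block_stab G r \<omega>) ?BG \<and>
            point_stab G \<omega> \<subseteq> block_stab G r \<omega> \<and>
            block_stab G r \<omega> \<subset> G \<and>
            (\<forall>H. subgroup H ?BG \<and> point_stab G \<omega> \<subseteq> H \<and> H \<subset> G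
                 \<longrightarrow> H \<subseteq> block_stab G r \<omega>)"
      by (intro ballI) (rule part1)
    show "r \<noteq> \<Omega> \<times> \<Omega>" by (rule rne)
    show "\<forall>s. equiv \<Omega> s \<and> G_invariant G s \<and> s \<noteq> \<Omega> \<times> \<Omega> \<longrightarrow> s \<subseteq> r"
      using coarse by blast
  qed
qed

end
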